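(* Let $\mathsf X$ and $\mathsf A$ be finite sets, let $p:\mathsf X\times\mathsf A\times\mathcal P(\mathsf X)\to\mathcal P(\mathsf X)$ and $r:\mathsf X\times\mathsf A\times\mathcal P(\mathsf X)\to[0,\infty)$, and suppose there are constants $L_1,K_1\ge 0$ such that for all $x,\hat x\in\mathsf X$, $a,\hat a\in\mathsf A$, $\mu,\hat\mu\in\mathcal P(\mathsf X)$: $$|r(x,a,\mu)-r(\hat x,\hat a,\hat\mu)|\le L_1\big(1_{\{x\neq\hat x\}}+2\cdot 1_{\{a\neq\hat a\}}+\|\mu-\hat\mu\|_1\big),$$ $$\|p(\cdot|x,a,\mu)-p(\cdot|\hat x,\hat a,\hat\mu)\|_1\le K_1\big(1_{\{x\neq\hat x\}}+2\cdot 1_{\{a\neq\hat a\}}+\|\mu-\hat\mu\|_1\big).$$ Let $\mathsf U=\mathcal P(\mathsf A)$ and define $P(\cdot|x,u,\mu)=\sum_{a\in\mathsf A}p(\cdot|x,a,\mu)\,u(a)$ and $R(x,u,\mu)=\sum_{a\in\mathsf A}r(x,a,\mu)\,u(a)$. Then for all $x,\hat x\in\mathsf X$, $u,\hat u\in\mathsf U$, $\mu,\hat\mu\in\mathcal P(\mathsf X)$: $$|R(x,u,\mu)-R(\hat x,\hat u,\hat\mu)|\le L_1\big(1_{\{x\neq\hat x\}}+\|u-\hat u\|_1+\|\mu-\hat\mu\|_1\big),$$ $$\|P(\cdot|x,u,\mu)-P(\cdot|\hat x,\hat u,\hat\mu)\|_1\le K_1\big(1_{\{x\neq\hat x\}}+\|u-\hat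 u\|_1+\|\mu-\hat\mu\|_1\big).$$
   Context: For a finite set $\mathsf E$, $\mathcal P(\mathsf E)$ denotes the set of probability distributions on $\mathsf E$, viewed as vectors in $\mathbb R^{\mathsf E}$ and endowed with the $l_1$-norm $\|\cdot\|_1$. *)

theory Defs
  imports "HOL-Analysis.Analysis"
begin

definition pdist :: "('e::finite \<Rightarrow> real) set" where
  "pdist = {v. (\<forall>e. 0 \<le> v e) \<and> (\<Sum>e\<in>UNIV. v e) = 1}"

definition l1dist :: "('e::finite \<Rightarrow> real) \<Rightarrow> ('e \<Rightarrow> real) \<Rightarrow> real" where
  "l1dist v w = (\<Sum>e\<in>UNIV. \<bar>v e - w e\<bar>)"

definition ind :: "bool \<Rightarrow> real" where
  "ind b = (if b then 1 else 0)"

definition Pk :: "('x \<Rightarrow> 'a::finite \<Rightarrow> 'm \<Rightarrow> ('x \<Rightarrow> real)) \<Rightarrow> 'x \<Rightarrow> ('a \<Rightarrow> real) \<Rightarrow> 'm \<Rightarrow> ('x \<Rightarrow> real)" where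
  "Pk p x u \<mu> = (\<lambda>y. \<Sum>a\<in>UNIV. p x a \<mu> y * u a)"

definition Rk :: "('x \<Rightarrow> 'a::finite \<Rightarrow> 'm \<Rightarrow> real) \<Rightarrow> 'x \<Rightarrow> ('a \<Rightarrow> real) \<Rightarrow> 'm \<Rightarrow> real" where
  "Rk r x u \<mu> = (\<Sum>a\<in>UNIV. r x a \<mu> * u a)"

end

theory Submission
  imports Defs
begin

lemma coupling:
  fixes u uh :: "'a::finite \<Rightarrow> real"
  assumes u: "u \<in> pdist" and uh: "uh \<in> pdist"
  shows "\<exists>w. (\<forall>a b. 0 \<le> w a b) \<and> (\<forall>a. (\<Sum>b\<in>UNIV. w a b) = u a) \<and> (\<forall>b. (\<Sum>a\<in>UNIV. w a b) = uh b)
     \<and> 2 * (\<Sum>a\<in>UNIV. \<Sum>b\<in>UNIV. w a b * ind (a \<noteq> b)) \<le> l1dist u uh"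
proof -
  define m where "m a = min (u a) (uh a)" for a
  define d where "d = 1 - (\<Sum>a\<in>UNIV. m a)"
  define w where "w a b = (if a = b then m a else 0) + (u a - m a) * (uh b - m b) / d" for a b
  have u1: "(\<Sum>a\<in>UNIV. u a) = 1" and u0: "\<And>a. 0 \<le> u a" using u by (auto simp: pdist_def)
  have uh1: "(\<Sum>a\<in>UNIV. uh a) = 1" and uh0: "\<And>a. 0 \<le> uh a" using uh by (auto simp: pdist_def)
  have du: "(\<Sum>a\<in>UNIV. u a - m a) = d" using u1 by (simp add: d_def sum_subtractf)
  have duh: "(\<Sum>a\<in>UNIV. uh a - m a) = d" using uh1 by (simp add: d_def sum_subtractf)
  have pu: "\<And>a. 0 \<le> u a - m a" and puh: "\<And>a. 0 \<le> uh a - m a" by (auto simp: m_def)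
  have d0: "0 \<le> d" using du pu by (metis sum_nonneg)
  have w0: "\<forall>a b. 0 \<le> w a b"
    using d0 pu puh u0 uh0 by (auto simp: w_def m_def intro!: add_nonneg_nonneg divide_nonneg_nonneg mult_nonneg_nonneg)
  have zu: "u a - m a = 0" if "d = 0" for a
    using du pu that sum_nonneg_eq_0_iff[of UNIV "\<lambda>a. u a - m a"] by auto
  have zuh: "uh a - m a = 0" if "d = 0" for a
    using duh puh that sum_nonneg_eq_0_iff[of UNIV "\<lambda>a. uh a - m a"] by auto
  have m1: "(\<Sum>b\<in>UNIV. w a b) = u a" for a
  proof -
    have "(\<Sum>b\<in>UNIV. w a b) = m a + (u a - m a) * (\<Sum>b\<in>UNIV. uh b - m b) / d"
      by (simp add: w_def sum.distrib sum_divide_distrib[symmetric] sum_distrib_left[symmetric])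
    also have "\<dots> = u a" using duh zu by (cases "d = 0") auto
    finally show ?thesis .
  qed
  have m2: "(\<Sum>a\<in>UNIV. w a b) = uh b" for b
  proof -
    have "(\<Sum>a\<in>UNIV. w a b) = m b + (\<Sum>a\<in>UNIV. u a - m a) * (uh b - m b) / d"
      by (simp add: w_def sum.distrib sum_divide_distrib[symmetric] sum_distrib_right[symmetric])
    also have "\<dots> = uh b" using du zuh by (cases "d = 0") auto
    finally show ?thesis .
  qed
  have "(\<Sum>a\<in>UNIV. \<Sum>b\<in>UNIV. w a b * ind (a \<noteq> b))
      \<le> (\<Sum>a\<in>UNIV. \<Sum>b\<in>UNIV. (u a - m a) * (uh b - m b) / d)"
    using pu puh d0 by (intro sum_mono) (auto simp: w_def ind_def)
  also have "\<dots> = (\<Sum>a\<in>UNIV. u a - m a) * (\<Sum>b\<in>UNIV. uh b - m b) / d"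
    by (simp add: sum_divide_distrib[symmetric] sum_distrib_left[symmetric] sum_distrib_right[symmetric])
  also have "\<dots> = d" using du duh by (cases "d = 0") auto
  finally have A: "(\<Sum>a\<in>UNIV. \<Sum>b\<in>UNIV. w a b * ind (a \<noteq> b)) \<le> d" .
  have "l1dist u uh = (\<Sum>a\<in>UNIV. (u a - m a) + (uh a - m a))"
    unfolding l1dist_def by (intro sum.cong) (auto simp: m_def)
  also have "\<dots> = 2 * d" by (simp only: sum.distrib du duh)
  finally have "l1dist u uh = 2 * d" .
  with A w0 m1 m2 show ?thesis by (intro exI[of _ w]) auto
qed

theorem proposition1:
  fixes p :: "'x::finite \<Rightarrow> 'a::finite \<Rightarrow> ('x \<Rightarrow> real) \<Rightarrow> ('x \<Rightarrow> real)"
    and r :: "'x \<Rightarrow> 'a \<Rightarrow> ('x \<Rightarrow> real) \<Rightarrow> real"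
    and L1 K1 :: real
  assumes p_dist: "\<And>x a \<mu>. \<mu> \<in> pdist \<Longrightarrow> p x a \<mu> \<in> pdist"
    and r_nonneg: "\<And>x a \<mu>. \<mu> \<in> pdist \<Longrightarrow> 0 \<le> r x a \<mu>"
    and L1_nonneg: "0 \<le> L1" and K1_nonneg: "0 \<le> K1"
    and r_lip: "\<And>x xh a ah \<mu> \<mu>h. \<mu> \<in> pdist \<Longrightarrow> \<mu>h \<in> pdist \<Longrightarrow>
        \<bar>r x a \<mu> - r xh ah \<mu>h\<bar> \<le> L1 * (ind (x \<noteq> xh) + 2 * ind (a \<noteq> ah) + l1dist \<mu> \<mu>h)"
    and p_lip: "\<And>x xh a ah \<mu> \<mu>h. \<mu> \<in> pdist \<Longrightarrow> \<mu>h \<in> pdist \<Longrightarrow>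
        l1dist (p x a \<mu>) (p xh ah \<mu>h) \<le> K1 * (ind (x \<noteq> xh) + 2 * ind (a \<noteq> ah) + l1dist \<mu> \<mu>h)"
  shows "\<forall>x xh u uh \<mu> \<mu>h. u \<in> pdist \<longrightarrow> uh \<in> pdist \<longrightarrow> \<mu> \<in> pdist \<longrightarrow> \<mu>h \<in> pdist \<longrightarrow>
           \<bar>Rk r x u \<mu> - Rk r xh uh \<mu>h\<bar> \<le> L1 * (ind (x \<noteq> xh) + l1dist u uh + l1dist \<mu> \<mu>h)
         \<and> l1dist (Pk p x u \<mu>) (Pk p xh uh \<mu>h) \<le> K1 * (ind (x \<noteq> xh) + l1dist u uh + l1dist \<mu> \<mu>h)"
proof (intro allI impI)
  fix x xh :: 'x and u uh :: "'a \<Rightarrow> real" and \<mu> \<mu>h :: "'x \<Rightarrow> real"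
  assume u: "u \<in> pdist" and uh: "uh \<in> pdist" and mu: "\<mu> \<in> pdist" and muh: "\<mu>h \<in> pdist"
  obtain w :: "'a \<Rightarrow> 'a \<Rightarrow> real" where w0: "\<And>a b. 0 \<le> w a b" and m1: "\<And>a. (\<Sum>b\<in>UNIV. w a b) = u a"
    and m2: "\<And>b. (\<Sum>a\<in>UNIV. w a b) = uh b"
    and wi: "2 * (\<Sum>a\<in>UNIV. \<Sum>b\<in>UNIV. w a b * ind (a \<noteq> b)) \<le> l1dist u uh"
    using coupling[OF u uh] by blast
  have u1: "(\<Sum>a\<in>UNIV. u a) = 1" using u by (auto simp: pdist_def)
  have W1: "(\<Sum>a\<in>UNIV. \<Sum>b\<in>UNIV. w a b) = 1" using m1 u1 by simp
  define D where "D = ind (x \<noteq> xh) + l1dist \<mu> \<mu>h"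
  have key: "(\<Sum>a\<in>UNIV. \<Sum>b\<in>UNIV. w a b * (C * (D + 2 * ind (a \<noteq> b))))
      \<le> C * (ind (x \<noteq> xh) + l1dist u uh + l1dist \<mu> \<mu>h)" if C: "0 \<le> C" for C
  proof -
    have "(\<Sum>a\<in>UNIV. \<Sum>b\<in>UNIV. w a b * (C * (D + 2 * ind (a \<noteq> b))))
        = C * D * (\<Sum>a\<in>UNIV. \<Sum>b\<in>UNIV. w a b) + C * (2 * (\<Sum>a\<in>UNIV. \<Sum>b\<in>UNIV. w a b * ind (a \<noteq> b)))"
      by (simp add: algebra_simps sum.distrib sum_distrib_left)
    also have "\<dots> \<le> C * D + C * l1dist u uh" using W1 wi C by (simp add: mult_left_mono)
    finally show ?thesis by (simp add: D_def algebra_simps)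
  qed
  have "Rk r x u \<mu> - Rk r xh uh \<mu>h = (\<Sum>a\<in>UNIV. \<Sum>b\<in>UNIV. w a b * (r x a \<mu> - r xh b \<mu>h))"
  proof -
    have "Rk r x u \<mu> = (\<Sum>a\<in>UNIV. \<Sum>b\<in>UNIV. w a b * r x a \<mu>)"
      by (simp add: Rk_def m1[symmetric] sum_distrib_left sum_distrib_right mult.commute)
    moreover have "Rk r xh uh \<mu>h = (\<Sum>a\<in>UNIV. \<Sum>b\<in>UNIV. w a b * r xh b \<mu>h)"
      by (subst sum.swap) (simp add: Rk_def m2[symmetric] sum_distrib_left sum_distrib_right mult.commute)
    ultimately show ?thesis by (simp add: sum_subtractf right_diff_distrib)
  qed
  also have "\<bar>\<dots>\<bar> \<le> (\<Sum>a\<in>UNIV. \<Sum>b\<in>UNIV. w a b * \<bar>r x a \<mu> - r xh b \<mu>h\<bar>)"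
    by (rule order_trans[OF sum_abs], rule sum_mono, rule order_trans[OF sum_abs])
       (simp add: abs_mult w0)
  also have "\<dots> \<le> (\<Sum>a\<in>UNIV. \<Sum>b\<in>UNIV. w a b * (L1 * (D + 2 * ind (a \<noteq> b))))"
    by (intro sum_mono mult_left_mono w0) (use r_lip[OF mu muh] in \<open>auto simp: D_def algebra_simps\<close>)
  also have "\<dots> \<le> L1 * (ind (x \<noteq> xh) + l1dist u uh + l1dist \<mu> \<mu>h)" by (rule key[OF L1_nonneg])
  finally have R: "\<bar>Rk r x u \<mu> - Rk r xh uh \<mu>h\<bar> \<le> L1 * (ind (x \<noteq> xh) + l1dist u uh + l1dist \<mu> \<mu>h)" .
  have Py: "Pk p x u \<mu> y - Pk p xh uh \<mu>h y = (\<Sum>a\<in>UNIV. \<Sum>b\<in>UNIV. w a b * (p x a \<mu> y - p xh b \<mu>h y))" for y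
  proof -
    have "Pk p x u \<mu> y = (\<Sum>a\<in>UNIV. \<Sum>b\<in>UNIV. w a b * p x a \<mu> y)"
      by (simp add: Pk_def m1[symmetric] sum_distrib_left sum_distrib_right mult.commute)
    moreover have "Pk p xh uh \<mu>h y = (\<Sum>a\<in>UNIV. \<Sum>b\<in>UNIV. w a b * p xh b \<mu>h y)"
      by (subst sum.swap) (simp add: Pk_def m2[symmetric] sum_distrib_left sum_distrib_right mult.commute)
    ultimately show ?thesis by (simp add: sum_subtractf right_diff_distrib)
  qed
  have "l1dist (Pk p x u \<mu>) (Pk p xh uh \<mu>h) = (\<Sum>y\<in>UNIV. \<bar>\<Sum>a\<in>UNIV. \<Sum>b\<in>UNIV. w a b * (p x a \<mu> y - p xh b \<mu>h y)\<bar>)"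
    by (simp add: l1dist_def Py)
  also have "\<dots> \<le> (\<Sum>y\<in>UNIV. \<Sum>a\<in>UNIV. \<Sum>b\<in>UNIV. w a b * \<bar>p x a \<mu> y - p xh b \<mu>h y\<bar>)"
    by (rule sum_mono, rule order_trans[OF sum_abs], rule sum_mono, rule order_trans[OF sum_abs])
       (simp add: abs_mult w0)
  also have "\<dots> = (\<Sum>a\<in>UNIV. \<Sum>y\<in>UNIV. \<Sum>b\<in>UNIV. w a b * \<bar>p x a \<mu> y - p xh b \<mu>h y\<bar>)"
    by (rule sum.swap)
  also have "\<dots> = (\<Sum>a\<in>UNIV. \<Sum>b\<in>UNIV. \<Sum>y\<in>UNIV. w a b * \<bar>p x a \<mu> y - p xh b \<mu>h y\<bar>)"
    by (rule sum.cong[OF refl], rule sum.swap)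
  also have "\<dots> = (\<Sum>a\<in>UNIV. \<Sum>b\<in>UNIV. w a b * l1dist (p x a \<mu>) (p xh b \<mu>h))"
    by (simp add: l1dist_def sum_distrib_left)
  also have "\<dots> \<le> (\<Sum>a\<in>UNIV. \<Sum>b\<in>UNIV. w a b * (K1 * (D + 2 * ind (a \<noteq> b))))"
    by (intro sum_mono mult_left_mono w0) (use p_lip[OF mu muh] in \<open>auto simp: D_def algebra_simps\<close>)
  also have "\<dots> \<le> K1 * (ind (x \<noteq> xh) + l1dist u uh + l1dist \<mu> \<mu>h)" by (rule key[OF K1_nonneg])
  finally show "\<bar>Rk r x u \<mu> - Rk r xh uh \<mu>h\<bar> \<le> L1 * (ind (x \<noteq> xh) + l1dist u uh + l1dist \<mu> \<mu>h)
         \<and> l1dist (Pk p x u \<mu>) (Pk p xh uh \<mu>h) \<le> K1 * (ind (x \<noteq> xh) + l1dist u uh + l1dist \<mu> \<mu>h)"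
    using R by simp
qed

end
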